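(* Let $f(x)=\frac1n\sum_{i=1}^nf_i(x)$ with each $f_i:\mathbb{R}^d\to\mathbb{R}$ differentiable and $\mu$-strongly convex ($\mu>0$), $x_\star$ the minimizer of $f$, and suppose there exists $\nu>0$ such that for all $x^1,\dots,x^n\in\mathbb{R}^d$, $$\frac1n\sum_{j=1}^n\Big\|\nabla f_j(x^j)-\frac1n\sum_{i=1}^n\nabla f_i(x^i)-\nabla f_j(x_\star)\Big\|^2\le\nu^2\frac1n\sum_{j=1}^n\|x^j-x_\star\|^2.$$ Let $x_0,w_0^1,\dots,w_0^n\in\mathbb{R}^d$ be arbitrary and run Point SAGA (see context). Then for any $\gamma>0$ and all $k\ge0$, $$\mathbb{E}[\Psi_k]\le\max\left\{\left(\frac1{1+\gamma\mu}\right)^k,\ \left(\frac{1}{1+\gamma\mu}\cdot\frac{\gamma\nu^2}{\mu n}+1-\frac1n\right)^k\right\}\Psi_0,\qquad \Psi_k:=\|x_k-x_\star\|^2+\gamma\mu\sum_{i=1}^n\|w_k^i-x_\star\|^2.$$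
   Context: Point SAGA: parameters $\gamma>0$, $x_0\in\mathbb{R}^d$, $w_0^1,\dots,w_0^n\in\mathbb{R}^d$. For $k\ge0$: sample $i_k$ uniformly from $[n]$ independently; $h_k=\nabla f_{i_k}(w_k^{i_k})-\frac1n\sum_{j=1}^n\nabla f_j(w_k^j)$; $x_{k+1}=\operatorname{prox}_{\gamma f_{i_k}}(x_k+\gamma h_k)$; $w_{k+1}^{i_k}=x_{k+1}$ and $w_{k+1}^j=w_k^j$ for $j\ne i_k$. $\operatorname{prox}_{\gamma\phi}(y):=\arg\min_x\{\phi(x)+\frac1{2\gamma}\|x-y\|^2\}$. $\mu$-strong convexity of $g$: $g(y)+\langle\nabla g(y),x-y\rangle+\frac{\mu}{2}\|x-y\|^2\le g(x)$ for all $x,y$. *)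

theory Defs
  imports "HOL-Analysis.Analysis" "HOL-Probability.Probability"
begin

definition prox :: "real \<Rightarrow> ('a::real_normed_vector \<Rightarrow> real) \<Rightarrow> 'a \<Rightarrow> 'a" where
  "prox \<gamma> \<phi> y = (ARG_MIN (\<lambda>x. \<phi> x + (norm (x - y))\<^sup>2 / (2 * \<gamma>)) x. True)"

definition saga_step ::
  "nat \<Rightarrow> (nat \<Rightarrow> 'a::real_inner \<Rightarrow> real) \<Rightarrow> (nat \<Rightarrow> 'a \<Rightarrow> 'a) \<Rightarrow> real
   \<Rightarrow> 'a \<times> (nat \<Rightarrow> 'a) \<Rightarrow> nat \<Rightarrow> 'a \<times> (nat \<Rightarrow> 'a)" where
  "saga_step n f g \<gamma> s i =
     (let x = fst s; w = snd s;
          h = g i (w i) - (1 / real n) *\<^sub>R (\<Sum>j<n. g j (w j));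
          x' = prox \<gamma> (f i) (x + \<gamma> *\<^sub>R h)
      in (x', w(i := x')))"

fun saga_pmf ::
  "nat \<Rightarrow> (nat \<Rightarrow> 'a::real_inner \<Rightarrow> real) \<Rightarrow> (nat \<Rightarrow> 'a \<Rightarrow> 'a) \<Rightarrow> real
   \<Rightarrow> 'a \<Rightarrow> (nat \<Rightarrow> 'a) \<Rightarrow> nat \<Rightarrow> ('a \<times> (nat \<Rightarrow> 'a)) pmf" where
  "saga_pmf n f g \<gamma> x0 w0 0 = return_pmf (x0, w0)"
| "saga_pmf n f g \<gamma> x0 w0 (Suc k) =
     bind_pmf (saga_pmf n f g \<gamma> x0 w0 k)
       (\<lambda>s. map_pmf (saga_step n f g \<gamma> s) (pmf_of_set {..<n}))"

definition Psi :: "nat \<Rightarrow> real \<Rightarrow> real \<Rightarrow> 'a::real_normed_vector \<Rightarrow> 'a \<times> (nat \<Rightarrow> 'a) \<Rightarrow> real" where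
  "Psi n \<gamma> \<mu> xs s = (norm (fst s - xs))\<^sup>2 + \<gamma> * \<mu> * (\<Sum>i<n. (norm (snd s i - xs))\<^sup>2)"

end

theory Submission
  imports Defs
begin

lemma prox_char:
  fixes F :: "'a::euclidean_space \<Rightarrow> real" and G :: "'a \<Rightarrow> 'a"
  assumes grad: "\<And>x. GDERIV F x :> G x"
    and sc: "\<And>x y. F y + inner (G y) (x - y) + \<mu> / 2 * (norm (x - y))\<^sup>2 \<le> F x"
    and mu: "\<mu> > 0" and gam: "\<gamma> > 0"
  shows "prox \<gamma> F y + \<gamma> *\<^sub>R G (prox \<gamma> F y) = y"
proof -
  define \<phi> where "\<phi> = (\<lambda>x. F x + (norm (x - y))\<^sup>2 / (2 * \<gamma>))"
  have dF: "\<And>x. (F has_derivative (\<lambda>h. inner h (G x))) (at x)"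
    using grad by (simp add: gderiv_def)
  have contF: "continuous_on UNIV F"
    using dF has_derivative_continuous continuous_at_imp_continuous_on by blast
  define R where "R = 2 * norm (G y) / \<mu> + 1"
  have R0: "R > 0" unfolding R_def using mu by (simp add: add_nonneg_pos)
  have contphi: "continuous_on (cball y R) \<phi>"
    unfolding \<phi>_def
    using gam by (intro continuous_intros continuous_on_subset[OF contF]) auto
  obtain p0 where p0: "p0 \<in> cball y R" "\<forall>z\<in>cball y R. \<phi> p0 \<le> \<phi> z"
    using continuous_attains_inf[OF compact_cball _ contphi] R0 by fastforce
  have glob: "\<phi> p0 \<le> \<phi> z" for z
  proof (cases "z \<in> cball y R")
    case True thus ?thesis using p0 by auto
  next
    case False
    define r where "r = norm (z - y)"
    have r: "r > R" using False by (simp add: r_def dist_norm norm_minus_commute)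
    have s1: "F y + inner (G y) (z - y) + \<mu> / 2 * r\<^sup>2 \<le> F z" using sc[of y z] by (simp add: r_def)
    have s2: "inner (G y) (z - y) \<ge> - (norm (G y) * r)"
      using Cauchy_Schwarz_ineq2[of "G y" "z - y"] by (simp add: r_def)
    have "\<mu> / 2 * r > norm (G y)"
    proof -
      have "\<mu> / 2 * r > \<mu> / 2 * R" using r mu by simp
      also have "\<mu> / 2 * R = norm (G y) + \<mu> / 2" unfolding R_def using mu by (simp add: field_simps)
      finally show ?thesis using mu by linarith
    qed
    then have "\<mu> / 2 * r * r > norm (G y) * r" using r R0 by (intro mult_strict_right_mono) auto
    then have "\<mu> / 2 * r\<^sup>2 - norm (G y) * r > 0" by (simp add: power2_eq_square)
    then have "F z > F y" using s1 s2 by linarith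
    moreover have "\<phi> y = F y" by (simp add: \<phi>_def)
    moreover have "\<phi> z \<ge> F z" using gam by (simp add: \<phi>_def)
    moreover have "\<phi> p0 \<le> \<phi> y" using p0 R0 by auto
    ultimately show ?thesis by linarith
  qed
  have "\<exists>x. is_arg_min \<phi> (\<lambda>x. True) x"
    using glob by (auto simp: is_arg_min_def not_less)
  then have "is_arg_min \<phi> (\<lambda>x. True) (prox \<gamma> F y)"
    unfolding prox_def arg_min_def \<phi>_def[symmetric] by (rule someI_ex)
  then have min: "\<forall>z\<in>UNIV. \<phi> (prox \<gamma> F y) \<le> \<phi> z"
    by (auto simp: is_arg_min_def not_less)
  define p where "p = prox \<gamma> F y"
  define v where "v = G p + (1 / \<gamma>) *\<^sub>R (p - y)"
  have dphi: "(\<phi> has_derivative (\<lambda>h. inner h v)) (at p)"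
  proof -
    have d2: "((\<lambda>x. (norm (x - y))\<^sup>2) has_derivative (\<lambda>h. 2 *\<^sub>R ((p - y) \<bullet> h))) (at p)"
      using has_derivative_compose[OF has_derivative_diff[OF has_derivative_ident has_derivative_const[of y]] has_derivative_sqnorm_at[of "p - y"]]
      by simp
    have d3: "((\<lambda>x. (norm (x - y))\<^sup>2 / (2 * \<gamma>)) has_derivative (\<lambda>h. 2 *\<^sub>R ((p - y) \<bullet> h) / (2 * \<gamma>))) (at p)"
      using bounded_linear.has_derivative[OF bounded_linear_divide[of "2*\<gamma>"] d2] by simp
    have "(\<phi> has_derivative (\<lambda>h. inner h (G p) + 2 *\<^sub>R ((p - y) \<bullet> h) / (2 * \<gamma>))) (at p)"
      unfolding \<phi>_def by (intro has_derivative_add dF d3)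
    then show ?thesis
      by (rule has_derivative_subst) (auto simp: v_def fun_eq_iff inner_add_right inner_commute gam)
  qed
  have "(\<lambda>h. inner h v) = (\<lambda>h. 0)"
    using differential_zero_maxmin[OF _ open_UNIV dphi] min p_def by blast
  then have "inner v v = 0" by metis
  then have "v = 0" by simp
  then have "\<gamma> *\<^sub>R v = 0" by simp
  then show ?thesis using gam by (simp add: v_def p_def algebra_simps)
qed


lemma prox_contract:
  fixes F :: "'a::euclidean_space \<Rightarrow> real" and G :: "'a \<Rightarrow> 'a"
  assumes sc: "\<And>x y. F y + inner (G y) (x - y) + \<mu> / 2 * (norm (x - y))\<^sup>2 \<le> F x"
    and mu: "\<mu> > 0" and gam: "\<gamma> > 0"
    and pa: "p + \<gamma> *\<^sub>R G p = a" and qb: "q + \<gamma> *\<^sub>R G q = b"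
  shows "(1 + \<gamma> * \<mu>)\<^sup>2 * (norm (p - q))\<^sup>2 \<le> (norm (a - b))\<^sup>2"
proof -
  have m: "inner (G p - G q) (p - q) \<ge> \<mu> * (norm (p - q))\<^sup>2"
  proof -
    have 1: "F q + inner (G q) (p - q) + \<mu> / 2 * (norm (p - q))\<^sup>2 \<le> F p" by (rule sc)
    have 2: "F p + inner (G p) (q - p) + \<mu> / 2 * (norm (q - p))\<^sup>2 \<le> F q" by (rule sc)
    have "inner (G p) (q - p) = - inner (G p) (p - q)" by (simp add: inner_diff_right)
    moreover have "norm (q - p) = norm (p - q)" by (rule norm_minus_commute)
    ultimately show ?thesis using 1 2 by (simp add: inner_diff_left)
  qed
  have "inner (a - b) (p - q) = (norm (p - q))\<^sup>2 + \<gamma> * inner (G p - G q) (p - q)"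
    unfolding pa[symmetric] qb[symmetric]
    by (simp add: inner_diff_left inner_add_left power2_norm_eq_inner algebra_simps)
  also have "\<dots> \<ge> (1 + \<gamma> * \<mu>) * (norm (p - q))\<^sup>2"
    using mult_left_mono[OF m, of \<gamma>] gam by (simp add: algebra_simps)
  finally have "(1 + \<gamma> * \<mu>) * (norm (p - q))\<^sup>2 \<le> norm (a - b) * norm (p - q)"
    using norm_cauchy_schwarz[of "a - b" "p - q"] by linarith
  then have "(1 + \<gamma> * \<mu>) * norm (p - q) \<le> norm (a - b)"
    by (cases "norm (p - q) = 0") (auto simp: power2_eq_square)
  moreover have "0 \<le> (1 + \<gamma> * \<mu>) * norm (p - q)" using gam mu by simp
  ultimately have "((1 + \<gamma> * \<mu>) * norm (p - q))\<^sup>2 \<le> (norm (a - b))\<^sup>2"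
    by (rule power_mono)
  then show ?thesis by (simp add: power_mult_distrib)
qed


lemma sum_upd_lessThan:
  fixes h :: "'a \<Rightarrow> real" and i n :: nat
  assumes "i < n"
  shows "(\<Sum>j<n. h ((w(i := v)) j)) = (\<Sum>j<n. h (w j)) - h (w i) + h v"
proof -
  have i: "i \<in> {..<n}" using assms by simp
  have "(\<Sum>j<n. h ((w(i := v)) j)) = h v + (\<Sum>j\<in>{..<n} - {i}. h ((w(i := v)) j))"
    using sum.remove[OF finite_lessThan i, of "\<lambda>j. h ((w(i := v)) j)"] by simp
  also have "(\<Sum>j\<in>{..<n} - {i}. h ((w(i := v)) j)) = (\<Sum>j\<in>{..<n} - {i}. h (w j))"
    by (rule sum.cong) auto
  also have "\<dots> = (\<Sum>j<n. h (w j)) - h (w i)"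
    using sum.remove[OF finite_lessThan i, of "\<lambda>j. h (w j)"] by simp
  finally show ?thesis by simp
qed

lemma max_power_nonneg:
  fixes a b :: real
  assumes "0 \<le> a" "0 \<le> b"
  shows "(max a b) ^ k = max (a ^ k) (b ^ k)"
proof (cases "a \<le> b")
  case True
  then have "a ^ k \<le> b ^ k" using assms by (intro power_mono) auto
  then show ?thesis using True by (simp add: max_def)
next
  case False
  then have "b ^ k \<le> a ^ k" using assms by (intro power_mono) auto
  then show ?thesis using False by (simp add: max_def)
qed

lemma norm_add_scale_sq:
  fixes u v :: "'a::real_inner"
  shows "(norm (u + c *\<^sub>R v))\<^sup>2 = (norm u)\<^sup>2 + 2 * c * inner u v + c\<^sup>2 * (norm v)\<^sup>2"
  unfolding power2_norm_eq_inner
  by (simp add: inner_add_left inner_add_right inner_commute algebra_simps power2_eq_square)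

theorem mainTheorem12:
  fixes n :: nat
    and f :: "nat \<Rightarrow> 'a::euclidean_space \<Rightarrow> real"
    and g :: "nat \<Rightarrow> 'a \<Rightarrow> 'a"
    and \<mu> \<nu> \<gamma> :: real
    and xs x0 :: 'a
    and w0 :: "nat \<Rightarrow> 'a"
  assumes n_pos: "n \<ge> 1"
    and grad: "\<And>i x. i < n \<Longrightarrow> GDERIV (f i) x :> g i x"
    and mu_pos: "\<mu> > 0"
    and strongly_convex: "\<And>i x y. i < n \<Longrightarrow>
          f i y + inner (g i y) (x - y) + \<mu> / 2 * (norm (x - y))\<^sup>2 \<le> f i x"
    and minimizer: "\<And>x. (1 / real n) * (\<Sum>i<n. f i xs) \<le> (1 / real n) * (\<Sum>i<n. f i x)"
    and nu_pos: "\<nu> > 0"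
    and nu_bound: "\<And>X :: nat \<Rightarrow> 'a.
          (1 / real n) * (\<Sum>j<n. (norm (g j (X j) - (1 / real n) *\<^sub>R (\<Sum>i<n. g i (X i)) - g j xs))\<^sup>2)
          \<le> \<nu>\<^sup>2 * ((1 / real n) * (\<Sum>j<n. (norm (X j - xs))\<^sup>2))"
    and gamma_pos: "\<gamma> > 0"
  shows "measure_pmf.expectation (saga_pmf n f g \<gamma> x0 w0 k) (Psi n \<gamma> \<mu> xs)
           \<le> max ((1 / (1 + \<gamma> * \<mu>)) ^ k)
                  ((1 / (1 + \<gamma> * \<mu>) * (\<gamma> * \<nu>\<^sup>2 / (\<mu> * real n)) + 1 - 1 / real n) ^ k)
             * Psi n \<gamma> \<mu> xs (x0, w0)"
proof -
  define c where "c = 1 + \<gamma> * \<mu>"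
  define \<rho> where "\<rho> = 1 / (1 + \<gamma> * \<mu>) * (\<gamma> * \<nu>\<^sup>2 / (\<mu> * real n)) + 1 - 1 / real n"
  define m where "m = max (1 / c) \<rho>"
  define \<Psi> where "\<Psi> = Psi n \<gamma> \<mu> xs"
  have n0: "real n > 0" using n_pos by simp
  have c1: "c \<ge> 1" and c0: "c > 0" using mult_pos_pos[OF gamma_pos mu_pos] by (auto simp: c_def)
  have rho0: "\<rho> \<ge> 0"
  proof -
    have "1 / real n \<le> 1" using n_pos by simp
    moreover have "1 / (1 + \<gamma> * \<mu>) * (\<gamma> * \<nu>\<^sup>2 / (\<mu> * real n)) \<ge> 0"
      using gamma_pos mu_pos n0 by (intro mult_nonneg_nonneg divide_nonneg_nonneg) (auto intro: add_pos_pos)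
    ultimately show ?thesis unfolding \<rho>_def by linarith
  qed
  have m0: "m \<ge> 0" unfolding m_def using rho0 by simp
  have Psi_nonneg: "\<And>s. \<Psi> s \<ge> 0"
    unfolding \<Psi>_def Psi_def using gamma_pos mu_pos by (intro add_nonneg_nonneg mult_nonneg_nonneg sum_nonneg) auto
  have sum_gxs: "(\<Sum>i<n. g i xs) = 0"
  proof -
    have "(1 / real n) * (\<Sum>j<n. (norm (g j xs - (1 / real n) *\<^sub>R (\<Sum>i<n. g i xs) - g j xs))\<^sup>2)
          \<le> \<nu>\<^sup>2 * ((1 / real n) * (\<Sum>j<n. (norm (xs - xs))\<^sup>2))"
      using nu_bound[of "\<lambda>_. xs"] by simp
    then have "(norm ((1 / real n) *\<^sub>R (\<Sum>i<n. g i xs)))\<^sup>2 \<le> 0" using n0 by simp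
    then show ?thesis using n0 by auto
  qed
  have step_bound: "(\<Sum>i<n. \<Psi> (saga_step n f g \<gamma> (x, w) i)) / real n \<le> m * \<Psi> (x, w)" for x w
  proof -
    define A where "A i = g i (w i) - (1 / real n) *\<^sub>R (\<Sum>j<n. g j (w j))" for i
    define P where "P i = prox \<gamma> (f i) (x + \<gamma> *\<^sub>R A i)" for i
    define B where "B i = A i - g i xs" for i
    define D where "D = (norm (x - xs))\<^sup>2"
    define S where "S = (\<Sum>j<n. (norm (w j - xs))\<^sup>2)"
    define T where "T = (\<Sum>i<n. (norm (P i - xs))\<^sup>2)"
    have D0: "D \<ge> 0" and S0: "S \<ge> 0" by (auto simp: D_def S_def intro: sum_nonneg)
    have step_eq: "saga_step n f g \<gamma> (x, w) i = (P i, w(i := P i))" for i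
      by (simp add: saga_step_def Let_def A_def P_def)
    have Pi: "c\<^sup>2 * (norm (P i - xs))\<^sup>2 \<le> (norm (x - xs + \<gamma> *\<^sub>R B i))\<^sup>2" if i: "i < n" for i
    proof -
      have pa: "P i + \<gamma> *\<^sub>R g i (P i) = x + \<gamma> *\<^sub>R A i"
        unfolding P_def by (rule prox_char[OF grad[OF i] strongly_convex[OF i] mu_pos gamma_pos])
      have "c\<^sup>2 * (norm (P i - xs))\<^sup>2 \<le> (norm ((x + \<gamma> *\<^sub>R A i) - (xs + \<gamma> *\<^sub>R g i xs)))\<^sup>2"
        unfolding c_def by (rule prox_contract[OF strongly_convex[OF i] mu_pos gamma_pos pa refl])
      also have "(x + \<gamma> *\<^sub>R A i) - (xs + \<gamma> *\<^sub>R g i xs) = x - xs + \<gamma> *\<^sub>R B i"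
        by (simp add: B_def algebra_simps)
      finally show ?thesis .
    qed
    have sumB: "(\<Sum>i<n. B i) = 0"
    proof -
      have "(\<Sum>i<n. A i) = (\<Sum>j<n. g j (w j)) - real n *\<^sub>R ((1 / real n) *\<^sub>R (\<Sum>j<n. g j (w j)))"
        by (simp add: A_def sum_subtractf sum_constant_scaleR)
      also have "\<dots> = 0" using n0 by simp
      finally show ?thesis by (simp add: B_def sum_subtractf sum_gxs)
    qed
    have expand: "(\<Sum>i<n. (norm (x - xs + \<gamma> *\<^sub>R B i))\<^sup>2) = real n * D + \<gamma>\<^sup>2 * (\<Sum>i<n. (norm (B i))\<^sup>2)"
    proof -
      have "(\<Sum>i<n. (norm (x - xs + \<gamma> *\<^sub>R B i))\<^sup>2)
          = (\<Sum>i<n. D + 2 * \<gamma> * inner (x - xs) (B i) + \<gamma>\<^sup>2 * (norm (B i))\<^sup>2)"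
        by (simp add: norm_add_scale_sq D_def)
      also have "\<dots> = real n * D + 2 * \<gamma> * inner (x - xs) (\<Sum>i<n. B i) + \<gamma>\<^sup>2 * (\<Sum>i<n. (norm (B i))\<^sup>2)"
        by (simp add: sum.distrib sum_distrib_left inner_sum_right)
      finally show ?thesis by (simp add: sumB)
    qed
    have Bbound: "(\<Sum>i<n. (norm (B i))\<^sup>2) \<le> \<nu>\<^sup>2 * S"
    proof -
      have "(1 / real n) * (\<Sum>i<n. (norm (B i))\<^sup>2) \<le> \<nu>\<^sup>2 * ((1 / real n) * S)"
        using nu_bound[of w] by (simp add: B_def A_def S_def)
      then have "real n * ((1 / real n) * (\<Sum>i<n. (norm (B i))\<^sup>2)) \<le> real n * (\<nu>\<^sup>2 * ((1 / real n) * S))"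
        using n0 by (intro mult_left_mono) auto
      then show ?thesis using n0 by (simp add: field_simps)
    qed
    have cT: "c\<^sup>2 * T \<le> real n * D + \<gamma>\<^sup>2 * \<nu>\<^sup>2 * S"
    proof -
      have "c\<^sup>2 * T = (\<Sum>i<n. c\<^sup>2 * (norm (P i - xs))\<^sup>2)" by (simp add: T_def sum_distrib_left)
      also have "\<dots> \<le> (\<Sum>i<n. (norm (x - xs + \<gamma> *\<^sub>R B i))\<^sup>2)" by (rule sum_mono) (use Pi in auto)
      also have "\<dots> \<le> real n * D + \<gamma>\<^sup>2 * (\<nu>\<^sup>2 * S)"
        unfolding expand using Bbound by (intro add_left_mono mult_left_mono) auto
      finally show ?thesis by simp
    qed
    have Psi_i: "\<Psi> (saga_step n f g \<gamma> (x, w) i) = c * (norm (P i - xs))\<^sup>2 + \<gamma> * \<mu> * (S - (norm (w i - xs))\<^sup>2)"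
      if i: "i < n" for i
    proof -
      have upd: "(\<Sum>j<n. (norm ((w(i := P i)) j - xs))\<^sup>2) = S - (norm (w i - xs))\<^sup>2 + (norm (P i - xs))\<^sup>2"
        unfolding S_def by (rule sum_upd_lessThan[OF i, of "\<lambda>v. (norm (v - xs))\<^sup>2" w "P i"])
      show ?thesis
        unfolding step_eq \<Psi>_def Psi_def fst_conv snd_conv upd
        by (simp add: c_def algebra_simps)
    qed
    have "(\<Sum>i<n. \<Psi> (saga_step n f g \<gamma> (x, w) i)) = (\<Sum>i<n. c * (norm (P i - xs))\<^sup>2 + \<gamma> * \<mu> * (S - (norm (w i - xs))\<^sup>2))"
      by (rule sum.cong) (auto simp: Psi_i)
    also have "\<dots> = c * T + \<gamma> * \<mu> * (real n * S - S)"
      by (simp add: sum.distrib sum_distrib_left sum_subtractf T_def S_def right_diff_distrib) (simp add: mult_ac)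
    finally have sumPsi: "(\<Sum>i<n. \<Psi> (saga_step n f g \<gamma> (x, w) i)) = c * T + \<gamma> * \<mu> * (real n * S - S)" .
    have cT2: "c * T \<le> (real n * D + \<gamma>\<^sup>2 * \<nu>\<^sup>2 * S) / c"
      using cT c0 by (simp add: field_simps power2_eq_square)
    have "(c * T + \<gamma> * \<mu> * (real n * S - S)) / real n
        \<le> ((real n * D + \<gamma>\<^sup>2 * \<nu>\<^sup>2 * S) / c + \<gamma> * \<mu> * (real n * S - S)) / real n"
      using cT2 n0 by (intro divide_right_mono) auto
    also have "\<dots> = D / c + \<gamma> * \<mu> * \<rho> * S"
    proof -
      have rc: "\<rho> = 1 / c * (\<gamma> * \<nu>\<^sup>2 / (\<mu> * real n)) + 1 - 1 / real n"
        by (simp add: \<rho>_def c_def)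
      have "c \<noteq> 0" "\<mu> \<noteq> 0" "real n \<noteq> 0" using c0 mu_pos n0 by auto
      then show ?thesis unfolding rc by (simp add: field_simps power2_eq_square)
    qed
    also have "\<dots> \<le> m * D + \<gamma> * \<mu> * m * S"
    proof (intro add_mono)
      show "D / c \<le> m * D" using D0 mult_right_mono[of "1 / c" m D] by (simp add: m_def)
      show "\<gamma> * \<mu> * \<rho> * S \<le> \<gamma> * \<mu> * m * S"
        using S0 gamma_pos mu_pos by (intro mult_right_mono mult_left_mono) (auto simp: m_def)
    qed
    also have "\<dots> = m * \<Psi> (x, w)" by (simp add: \<Psi>_def Psi_def D_def S_def algebra_simps)
    finally show ?thesis using sumPsi by simp
  qed
  have inner: "(\<integral>\<^sup>+y. ennreal (\<Psi> y) \<partial>measure_pmf (map_pmf (saga_step n f g \<gamma> s) (pmf_of_set {..<n})))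
      = ennreal ((\<Sum>i<n. \<Psi> (saga_step n f g \<gamma> s i)) / real n)" for s
  proof -
    have ne: "{..<n} \<noteq> {}" using n_pos by (auto simp: lessThan_empty_iff)
    have "(\<integral>\<^sup>+y. ennreal (\<Psi> y) \<partial>measure_pmf (map_pmf (saga_step n f g \<gamma> s) (pmf_of_set {..<n})))
        = ennreal (measure_pmf.expectation (map_pmf (saga_step n f g \<gamma> s) (pmf_of_set {..<n})) \<Psi>)"
      by (intro nn_integral_eq_integral integrable_measure_pmf_finite AE_pmfI)
         (auto simp: ne Psi_nonneg)
    also have "measure_pmf.expectation (map_pmf (saga_step n f g \<gamma> s) (pmf_of_set {..<n})) \<Psi>
        = (\<Sum>i<n. \<Psi> (saga_step n f g \<gamma> s i)) / real n"
      by (simp add: integral_pmf_of_set ne)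
    finally show ?thesis .
  qed
  have nn: "(\<integral>\<^sup>+s. ennreal (\<Psi> s) \<partial>measure_pmf (saga_pmf n f g \<gamma> x0 w0 k)) \<le> ennreal (m ^ k * \<Psi> (x0, w0))" for k
  proof (induction k)
    case 0
    then show ?case by simp
  next
    case (Suc k)
    let ?M = "measure_pmf (saga_pmf n f g \<gamma> x0 w0 k)"
    have "(\<integral>\<^sup>+s. ennreal (\<Psi> s) \<partial>measure_pmf (saga_pmf n f g \<gamma> x0 w0 (Suc k)))
        = (\<integral>\<^sup>+s. ennreal ((\<Sum>i<n. \<Psi> (saga_step n f g \<gamma> s i)) / real n) \<partial>?M)"
      by (simp only: saga_pmf.simps(2) nn_integral_bind_pmf inner)
    also have "\<dots> \<le> (\<integral>\<^sup>+s. ennreal m * ennreal (\<Psi> s) \<partial>?M)"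
    proof (rule nn_integral_mono)
      fix s :: "'a \<times> (nat \<Rightarrow> 'a)"
      obtain x w where s: "s = (x, w)" by fastforce
      show "ennreal ((\<Sum>i<n. \<Psi> (saga_step n f g \<gamma> s i)) / real n) \<le> ennreal m * ennreal (\<Psi> s)"
        using step_bound[of x w] m0 Psi_nonneg[of s] by (simp add: s ennreal_mult[symmetric])
    qed
    also have "\<dots> = ennreal m * (\<integral>\<^sup>+s. ennreal (\<Psi> s) \<partial>?M)"
      by (rule nn_integral_cmult) simp
    also have "\<dots> \<le> ennreal m * ennreal (m ^ k * \<Psi> (x0, w0))"
      by (rule mult_left_mono[OF Suc.IH]) simp
    also have "\<dots> = ennreal (m ^ Suc k * \<Psi> (x0, w0))"
      using m0 Psi_nonneg[of "(x0, w0)"] by (simp add: ennreal_mult[symmetric] mult.assoc)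
    finally show ?case .
  qed
  have "measure_pmf.expectation (saga_pmf n f g \<gamma> x0 w0 k) \<Psi>
      = enn2real (\<integral>\<^sup>+s. ennreal (\<Psi> s) \<partial>measure_pmf (saga_pmf n f g \<gamma> x0 w0 k))"
    by (rule integral_eq_nn_integral) (auto simp: Psi_nonneg)
  also have "\<dots> \<le> enn2real (ennreal (m ^ k * \<Psi> (x0, w0)))"
    by (rule enn2real_mono[OF nn]) simp
  also have "\<dots> = m ^ k * \<Psi> (x0, w0)"
    using m0 Psi_nonneg[of "(x0, w0)"] by simp
  also have "m ^ k = max ((1 / (1 + \<gamma> * \<mu>)) ^ k) (\<rho> ^ k)"
    unfolding m_def c_def using c0 rho0 unfolding c_def by (intro max_power_nonneg) auto
  finally show ?thesis unfolding \<Psi>_def \<rho>_def .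
qed

end
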